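(* Let $(S,\Delta,\mathbb{P})$ be a probability space, $(U,d)$ a separable metric space, $\mathfrak{X}$ the set of $U$-valued random variables on $S$, $r\geq0$, $\mathcal{I}$ an ideal on $\mathbb{N}$, and $\underline{X}=\{X_n\}$ a sequence in $\mathfrak{X}$. Suppose that to each $Y\in\Gamma^{r^w}_{\underline{X}}(\mathcal{I}^{\mathbb{P}})$ a weak cluster constant $\delta_*(Y)$ is associated and that $\inf\{\delta_*(Y):Y\in\Gamma^{r^w}_{\underline{X}}(\mathcal{I}^{\mathbb{P}})\}>0$. Then $\Gamma^{r^w}_{\underline{X}}(\mathcal{I}^{\mathbb{P}})$ is closed in $(\mathfrak{X}^0,\rho)$.
   Context: The Ky Fan metric is $\rho(X,Y)=\inf\{\varepsilon>0:\mathbb{P}(d(X,Y)>\varepsilon)\leq\varepsilon\}$; $\mathfrak{X}^0$ is the set of equivalence classes of $\mathfrak{X}$ under almost sure equality, on which $\rho$ is a metric. An ideal on $\mathbb{N}$ is a family $\mathcal{I}\subseteq\mathcal{P}(\mathbb{N})$ with $\varnothing\in\mathcal{I}$, closed under finite unions and under subsets. $\Gamma^{r^w}_{\underline{X}}(\mathcal{I}^{\mathbb{P}})$ is the set of $Y\in\mathfrak{X}$ for which there is $\delta_*=\delta_*(Y)>0$ with $\{n:\mathbb{P}(d(X_n,Y)<r+\varepsilon)>\delta_*\}\notin\mathcal{I}$ for every $\varepsilon>0$; such a $\delta_*(Y)$ is called a weak cluster constant of $Y$ (with respect to $\underline{X}$). *)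

theory Defs
  imports "HOL-Probability.Probability"
begin

definition nat_ideal :: "nat set set \<Rightarrow> bool" where
  "nat_ideal I \<longleftrightarrow> {} \<in> I \<and> (\<forall>A\<in>I. \<forall>B\<in>I. A \<union> B \<in> I) \<and> (\<forall>A\<in>I. \<forall>B. B \<subseteq> A \<longrightarrow> B \<in> I)"

definition rand_vars :: "'s measure \<Rightarrow> ('s \<Rightarrow> 'u::metric_space) set" where
  "rand_vars M = borel_measurable M"

definition ky_fan :: "'s measure \<Rightarrow> ('s \<Rightarrow> 'u::metric_space) \<Rightarrow> ('s \<Rightarrow> 'u) \<Rightarrow> real" where
  "ky_fan M X Y = Inf {\<epsilon>. \<epsilon> > 0 \<and> measure M {s\<in>space M. dist (X s) (Y s) > \<epsilon>} \<le> \<epsilon>}"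

definition weak_cluster_const ::
  "'s measure \<Rightarrow> nat set set \<Rightarrow> real \<Rightarrow> (nat \<Rightarrow> 's \<Rightarrow> 'u::metric_space) \<Rightarrow> ('s \<Rightarrow> 'u) \<Rightarrow> real \<Rightarrow> bool" where
  "weak_cluster_const M I r X Y \<delta> \<longleftrightarrow> \<delta> > 0 \<and>
     (\<forall>\<epsilon>>0. {n. measure M {s\<in>space M. dist (X n s) (Y s) < r + \<epsilon>} > \<delta>} \<notin> I)"

definition weak_cluster_set ::
  "'s measure \<Rightarrow> nat set set \<Rightarrow> real \<Rightarrow> (nat \<Rightarrow> 's \<Rightarrow> 'u::metric_space) \<Rightarrow> ('s \<Rightarrow> 'u) set" where
  "weak_cluster_set M I r X = {Y \<in> rand_vars M. \<exists>\<delta>. weak_cluster_const M I r X Y \<delta>}"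

text \<open>Closedness of a set of random variables in the (pseudo)metric space of random
  variables with the Ky Fan metric (i.e. closedness of its image in the quotient by a.s. equality).\<close>
definition ky_fan_closed :: "'s measure \<Rightarrow> ('s \<Rightarrow> 'u::metric_space) set \<Rightarrow> bool" where
  "ky_fan_closed M A \<longleftrightarrow>
     (\<forall>Y\<in>rand_vars M. (\<forall>\<eta>>0. \<exists>Z\<in>A. ky_fan M Z Y < \<eta>) \<longrightarrow> (\<exists>Y'\<in>A. AE s in M. Y' s = Y s))"

end

theory Submission
  imports Defs
begin

lemma dist_meas:
  fixes X Y :: "'s \<Rightarrow> 'u::metric_space"
  assumes sep: "separable_space (euclidean :: 'u topology)"
    and X: "X \<in> borel_measurable M" and Y: "Y \<in> borel_measurable M"
  shows "(\<lambda>s. dist (X s) (Y s)) \<in> borel_measurable M"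
proof -
  obtain C :: "'u set" where C: "countable C" "closure C = UNIV"
    using sep unfolding separable_space_def by auto
  show ?thesis unfolding borel_measurable_iff_less
  proof
    fix t :: real
    have eq: "{s \<in> space M. dist (X s) (Y s) < t} =
      (\<Union>p\<in>C \<times> \<rat>. {s \<in> space M. dist (X s) (fst p) < snd p \<and> dist (Y s) (fst p) < t - snd p})"
    proof (rule set_eqI, rule iffI)
      fix s assume s: "s \<in> {s \<in> space M. dist (X s) (Y s) < t}"
      define e where "e = t - dist (X s) (Y s)"
      have e: "e > 0" using s by (simp add: e_def)
      obtain d where d: "d \<in> C" "dist d (X s) < e/3"
        proof -
        have "\<forall>\<epsilon>>0. \<exists>y\<in>C. dist y (X s) < \<epsilon>" using C(2) closure_approachable[of "X s" C] by auto
        moreover have "e/3 > 0" using e by simp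
        ultimately show ?thesis using that by blast
      qed
      obtain q where q: "q \<in> \<rat>" "dist d (X s) < q" "q < dist d (X s) + e/3"
        using Rats_dense_in_real[of "dist d (X s)" "dist d (X s) + e/3"] e by auto
      have "dist (Y s) d \<le> dist (X s) (Y s) + dist d (X s)"
        by (metis dist_commute dist_triangle add.commute)
      then have "dist (Y s) d < t - q" using q d e_def by linarith
      then show "s \<in> (\<Union>p\<in>C \<times> \<rat>. {s \<in> space M. dist (X s) (fst p) < snd p \<and> dist (Y s) (fst p) < t - snd p})"
        using s d q by (auto simp: dist_commute intro!: bexI[of _ "(d,q)"])
    next
      fix s assume "s \<in> (\<Union>p\<in>C \<times> \<rat>. {s \<in> space M. dist (X s) (fst p) < snd p \<and> dist (Y s) (fst p) < t - snd p})"
      then obtain d q where "s \<in> space M" "dist (X s) d < q" "dist (Y s) d < t - q" by auto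
      moreover have "dist (X s) (Y s) \<le> dist (X s) d + dist (Y s) d"
        by (simp add: dist_triangle2)
      ultimately show "s \<in> {s \<in> space M. dist (X s) (Y s) < t}" by auto
    qed
    have cnt: "countable (C \<times> \<rat>)" using C(1) countable_rat by auto
    have "\<And>p. {s \<in> space M. dist (X s) (fst p) < snd p \<and> dist (Y s) (fst p) < t - snd p} \<in> sets M"
    proof -
      fix p :: "'u \<times> real"
      have "{s \<in> space M. dist (X s) (fst p) < snd p \<and> dist (Y s) (fst p) < t - snd p}
        = (X -` ball (fst p) (snd p) \<inter> space M) \<inter> (Y -` ball (fst p) (t - snd p) \<inter> space M)"
        by (auto simp: dist_commute)
      also have "\<dots> \<in> sets M"
        using measurable_sets[OF X, of "ball (fst p) (snd p)"] measurable_sets[OF Y, of "ball (fst p) (t - snd p)"]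
        by auto
      finally show "{s \<in> space M. dist (X s) (fst p) < snd p \<and> dist (Y s) (fst p) < t - snd p} \<in> sets M" .
    qed
    then show "{s \<in> space M. dist (X s) (Y s) < t} \<in> sets M"
      unfolding eq using cnt by (intro sets.countable_UN'') auto
  qed
qed
theorem proposition3p13:
  fixes M :: "'s measure" and X :: "nat \<Rightarrow> 's \<Rightarrow> 'u::metric_space"
    and I :: "nat set set" and r :: real and \<delta> :: "('s \<Rightarrow> 'u) \<Rightarrow> real"
  assumes "prob_space M"
    and "separable_space (euclidean :: 'u topology)"
    and "r \<ge> 0"
    and "nat_ideal I"
    and "\<forall>n. X n \<in> rand_vars M"
    and "\<forall>Y\<in>weak_cluster_set M I r X. weak_cluster_const M I r X Y (\<delta> Y)"
    and "\<exists>c>0. \<forall>Y\<in>weak_cluster_set M I r X. c \<le> \<delta> Y"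
  shows "ky_fan_closed M (weak_cluster_set M I r X)"
  unfolding ky_fan_closed_def
proof (intro ballI impI)
  interpret P: prob_space M by (rule assms(1))
  obtain c where c: "c > 0" "\<forall>Y\<in>weak_cluster_set M I r X. c \<le> \<delta> Y" using assms(7) by auto
  fix Y assume Y: "Y \<in> rand_vars M" and H: "\<forall>\<eta>>0. \<exists>Z\<in>weak_cluster_set M I r X. ky_fan M Z Y < \<eta>"
  have Ym: "Y \<in> borel_measurable M" using Y by (simp add: rand_vars_def)
  have Xm: "X n \<in> borel_measurable M" for n using assms(5) by (simp add: rand_vars_def)
  have "weak_cluster_const M I r X Y (c/2)"
    unfolding weak_cluster_const_def
  proof (intro conjI allI impI)
    show "c/2 > 0" using c by simp
    fix \<epsilon> :: real assume \<epsilon>: "\<epsilon> > 0"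
    obtain Z where Z: "Z \<in> weak_cluster_set M I r X" "ky_fan M Z Y < min (\<epsilon>/2) (c/2)"
      using H \<epsilon> c by (metis half_gt_zero min_def)
    have Zm: "Z \<in> borel_measurable M" using Z(1) by (simp add: weak_cluster_set_def rand_vars_def)
    let ?S = "{e. e > 0 \<and> measure M {s\<in>space M. dist (Z s) (Y s) > e} \<le> e}"
    have "1 \<in> ?S" by (simp add: P.prob_le_1)
    then obtain e where e: "e > 0" "measure M {s\<in>space M. dist (Z s) (Y s) > e} \<le> e"
      "e < min (\<epsilon>/2) (c/2)"
      using cInf_lessD[of ?S] Z(2) unfolding ky_fan_def by blast
    have wZ: "weak_cluster_const M I r X Z (\<delta> Z)" using assms(6) Z(1) by auto
    have dZ: "c \<le> \<delta> Z" using c(2) Z(1) by auto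
    have A: "{n. measure M {s\<in>space M. dist (X n s) (Z s) < r + \<epsilon>/2} > \<delta> Z} \<notin> I"
      using wZ \<epsilon> unfolding weak_cluster_const_def by auto
    have sub: "{n. measure M {s\<in>space M. dist (X n s) (Z s) < r + \<epsilon>/2} > \<delta> Z}
       \<subseteq> {n. measure M {s\<in>space M. dist (X n s) (Y s) < r + \<epsilon>} > c/2}"
    proof
      fix n assume "n \<in> {n. measure M {s\<in>space M. dist (X n s) (Z s) < r + \<epsilon>/2} > \<delta> Z}"
      then have gt: "measure M {s\<in>space M. dist (X n s) (Z s) < r + \<epsilon>/2} > \<delta> Z" by simp
      have m1: "(\<lambda>s. dist (X n s) (Z s)) \<in> borel_measurable M" by (rule dist_meas[OF assms(2) Xm Zm])
      have m2: "(\<lambda>s. dist (X n s) (Y s)) \<in> borel_measurable M" by (rule dist_meas[OF assms(2) Xm Ym])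
      have m3: "(\<lambda>s. dist (Z s) (Y s)) \<in> borel_measurable M" by (rule dist_meas[OF assms(2) Zm Ym])
      let ?A = "{s\<in>space M. dist (X n s) (Z s) < r + \<epsilon>/2}"
      let ?B = "{s\<in>space M. dist (X n s) (Y s) < r + \<epsilon>}"
      let ?C = "{s\<in>space M. dist (Z s) (Y s) > e}"
      have sA: "?A \<in> sets M" using m1 by measurable
      have sB: "?B \<in> sets M" using m2 by measurable
      have sC: "?C \<in> sets M" using m3 by measurable
      have "?A \<subseteq> ?B \<union> ?C"
      proof
        fix s assume s: "s \<in> ?A"
        show "s \<in> ?B \<union> ?C"
        proof (cases "dist (Z s) (Y s) > e")
          case False
          have "dist (X n s) (Y s) \<le> dist (X n s) (Z s) + dist (Z s) (Y s)" by (rule dist_triangle)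
          then show ?thesis using False s e by auto
        qed (use s in auto)
      qed
      then have "measure M ?A \<le> measure M (?B \<union> ?C)"
        using sB sC by (intro P.finite_measure_mono) auto
      also have "\<dots> \<le> measure M ?B + measure M ?C"
        using sB sC by (intro measure_subadditive) auto
      finally show "n \<in> {n. measure M {s\<in>space M. dist (X n s) (Y s) < r + \<epsilon>} > c/2}"
        using gt dZ e by simp
    qed
    show "{n. measure M {s\<in>space M. dist (X n s) (Y s) < r + \<epsilon>} > c/2} \<notin> I"
      using A sub assms(4) unfolding nat_ideal_def by blast
  qed
  then have "Y \<in> weak_cluster_set M I r X" using Y by (auto simp: weak_cluster_set_def)
  then show "\<exists>Y'\<in>weak_cluster_set M I r X. AE s in M. Y' s = Y s" by auto
qed

end
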